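(* Let $\{\nu_n\}_{n\in\mathbb N}$ be probability measures on $\mathbb R^d$ with densities $\{p_n\}$. Suppose there are constants $\delta>0$, $c>0$, $N_0\in\mathbb N$ such that for all $n>N_0$: (1) $p_n$ has a unique maximizer $\hat\theta_n$; (2) $\nu_n(B_1(\hat\theta_n))>1/2$; (3) $p_n$ is positive and differentiable on $B_\delta(\hat\theta_n)$ and $$\sup_{\|\theta-\hat\theta_n\|\le\delta}\ \sup_{\|v\|=1}\frac{|\nabla_v p_n(\theta)|}{p_n(\theta)}\le n^c.$$ Let $\lambda_n$ be the density of the uniform distribution on $B_{n^{-c}}(\hat\theta_n)$. Then there is an absolute constant $C$ (not depending on $n,c,d$; one may take $C=2e$) such that for all $n>\max(N_0,\delta^{-1/c})$ and all $\theta\in B_{n^{-c}}(\hat\theta_n)$, $$\frac{\lambda_n(\theta)}{p_n(\theta)}\le C\,n^{cd}.$$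
   Context: $B_r(x)=\{y:\|x-y\|\le r\}$ is the closed Euclidean ball of radius $r$ about $x$; $\nabla_v$ denotes the directional derivative in direction $v$. *)

theory Defs
  imports "HOL-Probability.Probability"
begin

definition uniform_ball_density :: "'a::euclidean_space \<Rightarrow> real \<Rightarrow> 'a \<Rightarrow> real" where
  "uniform_ball_density z r x = indicator (cball z r) x / measure lborel (cball z r)"

end

theory Submission
  imports Defs
begin

theorem lemmaA1:
  fixes \<nu> :: "nat \<Rightarrow> 'a::euclidean_space measure"
    and p :: "nat \<Rightarrow> 'a \<Rightarrow> real"
    and \<theta>hat :: "nat \<Rightarrow> 'a"
    and \<delta> c :: real and N0 :: nat
  assumes dens: "\<And>n. \<nu> n = density lborel (\<lambda>x. ennreal (p n x))"
    and meas: "\<And>n. p n \<in> borel_measurable borel"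
    and nonneg: "\<And>n x. p n x \<ge> 0"
    and prob: "\<And>n. prob_space (\<nu> n)"
    and \<delta>_pos: "\<delta> > 0" and c_pos: "c > 0"
    and max: "\<And>n x. n > N0 \<Longrightarrow> p n x \<le> p n (\<theta>hat n)"
    and max_unique: "\<And>n y. n > N0 \<Longrightarrow> (\<forall>x. p n x \<le> p n y) \<Longrightarrow> y = \<theta>hat n"
    and mass: "\<And>n. n > N0 \<Longrightarrow> measure (\<nu> n) (cball (\<theta>hat n) 1) > 1/2"
    and pos: "\<And>n \<theta>. n > N0 \<Longrightarrow> \<theta> \<in> cball (\<theta>hat n) \<delta> \<Longrightarrow> p n \<theta> > 0"
    and diff: "\<And>n \<theta>. n > N0 \<Longrightarrow> \<theta> \<in> cball (\<theta>hat n) \<delta> \<Longrightarrow> p n differentiable (at \<theta>)"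
    and grad: "\<And>n \<theta> v. n > N0 \<Longrightarrow> \<theta> \<in> cball (\<theta>hat n) \<delta> \<Longrightarrow> norm v = 1 \<Longrightarrow>
        \<bar>frechet_derivative (p n) (at \<theta>) v\<bar> / p n \<theta> \<le> real n powr c"
  shows "\<forall>n. real n > max (real N0) (\<delta> powr (-1/c)) \<longrightarrow>
           (\<forall>\<theta>\<in>cball (\<theta>hat n) (real n powr (-c)).
              uniform_ball_density (\<theta>hat n) (real n powr (-c)) \<theta> / p n \<theta>
                \<le> 2 * exp 1 * real n powr (c * real DIM('a)))"
proof (intro allI impI ballI)
  fix n \<theta>
  assume nbig: "real n > max (real N0) (\<delta> powr (-1/c))"
  assume th: "\<theta> \<in> cball (\<theta>hat n) (real n powr (-c))"
  define r where "r = real n powr (-c)"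
  define V where "V = unit_ball_vol (real DIM('a))"
  define d where "d = DIM('a)"
  have nN: "n > N0" using nbig by auto
  have npos: "real n > 0" using nN by simp
  have rpos: "r > 0" using npos by (simp add: r_def)
  have Vpos: "V > 0" by (simp add: V_def)
  have nr: "real n powr c * r = 1" using npos by (simp add: r_def powr_minus field_simps)
  have dpos: "\<delta> powr (-1/c) > 0" using \<delta>_pos by simp
  have "r < (\<delta> powr (-1/c)) powr (-c)" unfolding r_def
    by (rule powr_less_mono2_neg) (use c_pos dpos nbig in auto)
  also have "\<dots> = \<delta>" using c_pos \<delta>_pos by (simp add: powr_powr)
  finally have rd: "r < \<delta>" .
  let ?B = "cball (\<theta>hat n) r"
  have Bsub: "?B \<subseteq> cball (\<theta>hat n) \<delta>" using rd by auto
  have lip: "norm (ln (p n \<theta>) - ln (p n (\<theta>hat n))) \<le> real n powr c * norm (\<theta> - \<theta>hat n)"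
  proof (rule differentiable_bound[where S="?B" and f="\<lambda>x. ln (p n x)"
        and f'="\<lambda>x v. frechet_derivative (p n) (at x) v * inverse (p n x)"])
    show "convex ?B" by simp
    fix x assume x: "x \<in> ?B"
    hence xd: "x \<in> cball (\<theta>hat n) \<delta>" using Bsub by auto
    have pd: "(p n has_derivative frechet_derivative (p n) (at x)) (at x within ?B)"
      using diff[OF nN xd] frechet_derivative_works has_derivative_at_withinI by blast
    show "((\<lambda>x. ln (p n x)) has_derivative (\<lambda>v. frechet_derivative (p n) (at x) v * inverse (p n x))) (at x within ?B)"
      by (rule has_derivative_ln[OF pos[OF nN xd] pd])
    have lin: "linear (frechet_derivative (p n) (at x))"
      using diff[OF nN xd] frechet_derivative_works has_derivative_linear by blast
    show "onorm (\<lambda>v. frechet_derivative (p n) (at x) v * inverse (p n x)) \<le> real n powr c"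
    proof (rule onorm_le)
      fix v :: 'a
      show "norm (frechet_derivative (p n) (at x) v * inverse (p n x)) \<le> real n powr c * norm v"
      proof (cases "v = 0")
        case True thus ?thesis using linear_0[OF lin] by simp
      next
        case False
        define u where "u = v /\<^sub>R norm v"
        have nu: "norm u = 1" using False by (simp add: u_def)
        have vu: "v = norm v *\<^sub>R u" using False by (simp add: u_def)
        have "frechet_derivative (p n) (at x) v = norm v * frechet_derivative (p n) (at x) u"
          by (subst vu, simp add: linear_scale[OF lin])
        moreover have "\<bar>frechet_derivative (p n) (at x) u\<bar> / p n x \<le> real n powr c"
          using grad[OF nN xd nu] .
        moreover have "p n x > 0" using pos[OF nN xd] .
        ultimately show ?thesis
          by (simp add: abs_mult divide_inverse mult.commute mult.left_commute mult_left_mono)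
      qed
    qed
  next
    show "\<theta> \<in> ?B" using th r_def by simp
    show "\<theta>hat n \<in> ?B" using rpos by simp
  qed
  have "norm (\<theta> - \<theta>hat n) \<le> r" using th by (simp add: r_def dist_norm norm_minus_commute)
  hence "real n powr c * norm (\<theta> - \<theta>hat n) \<le> 1" using nr
    by (metis mult_left_mono powr_ge_zero)
  with lip have lnb: "ln (p n (\<theta>hat n)) - 1 \<le> ln (p n \<theta>)" by simp
  have pth: "p n \<theta> > 0" using pos[OF nN] Bsub th r_def by auto
  have pmx: "p n (\<theta>hat n) > 0" using pos[OF nN, of "\<theta>hat n"] \<delta>_pos by simp
  have "p n (\<theta>hat n) / exp 1 = exp (ln (p n (\<theta>hat n)) - 1)" using pmx by (simp add: exp_diff)
  also have "\<dots> \<le> exp (ln (p n \<theta>))" using lnb by simp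
  also have "\<dots> = p n \<theta>" using pth by simp
  finally have pth_lb: "p n (\<theta>hat n) / exp 1 \<le> p n \<theta>" .
  let ?B1 = "cball (\<theta>hat n) 1"
  have "emeasure (\<nu> n) ?B1 = (\<integral>\<^sup>+x\<in>?B1. ennreal (p n x) \<partial>lborel)"
    unfolding dens by (rule emeasure_density) (use meas in auto)
  also have "\<dots> \<le> (\<integral>\<^sup>+x. ennreal (p n (\<theta>hat n)) * indicator ?B1 x \<partial>lborel)"
    by (rule nn_integral_mono) (auto simp: indicator_def intro!: ennreal_leI max[OF nN])
  also have "\<dots> = ennreal (p n (\<theta>hat n)) * emeasure lborel ?B1"
    by (rule nn_integral_cmult_indicator) simp
  also have "\<dots> = ennreal (p n (\<theta>hat n) * V)"
    by (simp add: emeasure_cball V_def ennreal_mult[symmetric] pmx less_imp_le)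
  finally have "ennreal (measure (\<nu> n) ?B1) \<le> ennreal (p n (\<theta>hat n) * V)"
    using finite_measure.emeasure_eq_measure[OF prob_space.finite_measure[OF prob]] by metis
  hence "measure (\<nu> n) ?B1 \<le> p n (\<theta>hat n) * V"
    using pmx Vpos by (simp add: ennreal_le_iff)
  with mass[OF nN] have pmx_lb: "1 < 2 * V * p n (\<theta>hat n)" by (simp add: algebra_simps)
  have ud: "uniform_ball_density (\<theta>hat n) r \<theta> = 1 / (V * r ^ d)"
    using th rpos by (simp add: uniform_ball_density_def r_def measure_def emeasure_cball V_def d_def)
  have rd': "r ^ d = real n powr (- (c * real d))"
    using npos by (simp add: r_def powr_realpow[symmetric] powr_powr)
  have rdpos: "r ^ d > 0" using rpos by simp
  have "1 / (V * r ^ d) / p n \<theta> \<le> 1 / (V * r ^ d) / (p n (\<theta>hat n) / exp 1)"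
    using pth_lb pmx Vpos rdpos pth by (intro divide_left_mono) auto
  also have "\<dots> = exp 1 / (r ^ d) * (1 / (V * p n (\<theta>hat n)))" by (simp add: field_simps)
  also have "\<dots> \<le> exp 1 / (r ^ d) * 2"
    using pmx_lb pmx Vpos rdpos by (intro mult_left_mono) (auto simp: field_simps)
  also have "\<dots> = 2 * exp 1 * real n powr (c * real d)"
    using rd' npos by (simp add: powr_minus divide_inverse)
  finally show "uniform_ball_density (\<theta>hat n) (real n powr (-c)) \<theta> / p n \<theta>
                \<le> 2 * exp 1 * real n powr (c * real DIM('a))"
    using ud by (simp add: r_def d_def)
qed

end
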